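(* Under the standing assumptions: (i) $\Lambda=\operatorname{epi}(f-\operatorname{eco}g+\delta_A)^c$; (ii) $\Omega=\bigcup_{(x^*,y^*,\alpha)\in\operatorname{dom}\delta_A^c}\operatorname{epi}\big(f-\operatorname{eco}g-c(\cdot,(-x^*,-y^*,\alpha))-\delta_A^c(x^*,y^*,\alpha)\big)^c$.
   Context: Let $X$ be a nontrivial separated locally convex space with topological dual $X^*$, endowed with the topology $\sigma(X,X^* )$; $\langle x,x^*\rangle$ is the value of $x^*\in X^*$ at $x\in X$. Put $W:=X^*\times X^*\times\mathbb{R}$. For $y^*\in X^*$, $\alpha\in\mathbb{R}$, let $H^-_{y^*,\alpha}:=\{x\in X:\langle x,y^*\rangle<\alpha\}$. The coupling function $c:X\times W\to\overline{\mathbb{R}}$ is $c(x,(x^*,y^*,\alpha)):=\langle x,x^*\rangle$ if $\langle x,y^*\rangle<\alpha$ and $:=+\infty$ otherwise. For $h:X\to\overline{\mathbb{R}}$ its $c$-conjugate is $h^c:W\to\overline{\mathbb{R}}$, $h^c(w):=\sup_{x\in X}\{c(x,w)-h(x)\}$, with the convention $(+\infty)+(-\infty)=(-\infty)+(+\infty)=(+\infty)-(+\infty)=(-\infty)-(-\infty)=-\infty$. Epigraphs of functions on $W$ are subsets of $W\times\mathbb{R}$. $\delta_A$ is the indicator function of $A$. For $E\subseteq W\times\mathbb{R}$ and $e\in W\times\mathbb{R}$, $E-e:=\{z-e:z\in E\}$. A set $C\subseteq X\times\mathbb{R}$ is e-convex if for every point $p\notin C$ there is a continuous linear functional $\ell$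 on $X\times\mathbb{R}$ with $\ell(q-p)<0$ for all $q\in C$; a function is e-convex if its epigraph is e-convex, and $\operatorname{eco}g$ is the largest e-convex minorant of $g$ (it equals $\sup_{(u^*,v^*,\gamma)\in\operatorname{dom}g^c}\{c(\cdot,(u^*,v^*,\gamma))-g^c(u^*,v^*,\gamma)\}$ when $g$ has a proper e-convex minorant). Standing assumptions: $f,g:X\to\overline{\mathbb{R}}$ proper convex with $\operatorname{dom}f\subseteq\operatorname{dom}g$, $A\subseteq X$ nonempty, convention $(+\infty)-(+\infty)=+\infty$ in differences $f-g$, $f-\operatorname{eco}g$. Sets: $\Lambda:=\bigcap_{(u^*,v^*,\gamma)\in\operatorname{dom}g^c}\Big[\operatorname{epi}(f+\delta_A)^c-\big(u^*,0,0,g^c(u^*,v^*,\gamma)\big)\Big]$, $\Omega:=\bigcup_{(x^*,y^*,\alpha)\in\operatorname{dom}\delta_A^c}\ \bigcap_{(u^*,v^*,\gamma)\in\operatorname{dom}g^c}\Big[\operatorname{epi}\big(f-c(\cdot,(-x^*,-y^*,\alpha))\big)^c-\big(u^*,0,0,g^c(u^*,v^*,\gamma)-\delta_A^c(x^*,y^*,\alpha)\big)\Big]$. *)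

theory Defs
  imports "HOL-Analysis.Analysis" "HOL-Library.Extended_Real"
begin

text \<open>Dual pair model: X is a real vector space of type 'x, and D is the
  topological dual X^* (a point-separating linear subspace of linear functionals);
  X carries sigma(X,X^*), whose continuous linear functionals are exactly D.\<close>

definition dual_pair :: "('x::real_vector \<Rightarrow> real) set \<Rightarrow> bool" where
  "dual_pair D \<longleftrightarrow> (\<forall>\<phi>\<in>D. linear \<phi>) \<and> (\<lambda>x. 0) \<in> D
     \<and> (\<forall>\<phi>\<in>D. \<forall>\<psi>\<in>D. (\<lambda>x. \<phi> x + \<psi> x) \<in> D)
     \<and> (\<forall>\<phi>\<in>D. \<forall>a::real. (\<lambda>x. a * \<phi> x) \<in> D)
     \<and> (\<forall>x. x \<noteq> 0 \<longrightarrow> (\<exists>\<phi>\<in>D. \<phi> x \<noteq> 0))"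

type_synonym 'x W = "('x \<Rightarrow> real) \<times> ('x \<Rightarrow> real) \<times> real"

definition Wset :: "('x \<Rightarrow> real) set \<Rightarrow> 'x W set" where
  "Wset D = D \<times> D \<times> UNIV"

text \<open>Lower subtraction: (+inf)-(+inf) = (-inf)-(-inf) = -inf (used in conjugates).\<close>
definition lsub :: "ereal \<Rightarrow> ereal \<Rightarrow> ereal" where
  "lsub a b = (if (a = \<infinity> \<and> b = \<infinity>) \<or> (a = -\<infinity> \<and> b = -\<infinity>) then -\<infinity>
               else if a = \<infinity> \<or> b = -\<infinity> then \<infinity>
               else if a = -\<infinity> \<or> b = \<infinity> then -\<infinity>
               else ereal (real_of_ereal a - real_of_ereal b))"

text \<open>Upper subtraction: (+inf)-(+inf) = (-inf)-(-inf) = +inf (used in f - g etc.).\<close>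
definition usub :: "ereal \<Rightarrow> ereal \<Rightarrow> ereal" where
  "usub a b = (if (a = \<infinity> \<and> b = \<infinity>) \<or> (a = -\<infinity> \<and> b = -\<infinity>) then \<infinity>
               else if a = \<infinity> \<or> b = -\<infinity> then \<infinity>
               else if a = -\<infinity> \<or> b = \<infinity> then -\<infinity>
               else ereal (real_of_ereal a - real_of_ereal b))"

definition coup :: "'x \<Rightarrow> 'x W \<Rightarrow> ereal" where
  "coup x w = (case w of (xs, ys, \<alpha>) \<Rightarrow> if ys x < \<alpha> then ereal (xs x) else \<infinity>)"

definition cconj :: "('x \<Rightarrow> ereal) \<Rightarrow> 'x W \<Rightarrow> ereal" where
  "cconj h w = (SUP x. lsub (coup x w) (h x))"

definition indic :: "'x set \<Rightarrow> 'x \<Rightarrow> ereal" where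
  "indic A x = (if x \<in> A then 0 else \<infinity>)"

definition domX :: "('x \<Rightarrow> ereal) \<Rightarrow> 'x set" where
  "domX h = {x. h x < \<infinity>}"

definition domW :: "('x \<Rightarrow> real) set \<Rightarrow> ('x W \<Rightarrow> ereal) \<Rightarrow> 'x W set" where
  "domW D k = {w \<in> Wset D. k w < \<infinity>}"

definition epiW :: "('x \<Rightarrow> real) set \<Rightarrow> ('x W \<Rightarrow> ereal) \<Rightarrow> ('x W \<times> real) set" where
  "epiW D k = {(w, r). w \<in> Wset D \<and> k w \<le> ereal r}"

definition shiftW :: "('x W \<times> real) set \<Rightarrow> ('x \<Rightarrow> real) \<Rightarrow> real \<Rightarrow> ('x W \<times> real) set" where
  "shiftW E u r = (\<lambda>((a, b, t), s). ((a - u, b, t), s - r)) ` E"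

definition proper_fn :: "('x \<Rightarrow> ereal) \<Rightarrow> bool" where
  "proper_fn f \<longleftrightarrow> (\<forall>x. f x \<noteq> -\<infinity>) \<and> (\<exists>x. f x \<noteq> \<infinity>)"

definition convex_fn :: "('x::real_vector \<Rightarrow> ereal) \<Rightarrow> bool" where
  "convex_fn f \<longleftrightarrow> (\<forall>x y (r::real) (s::real) (t::real). f x \<le> ereal r \<longrightarrow> f y \<le> ereal s
      \<longrightarrow> 0 \<le> t \<longrightarrow> t \<le> 1 \<longrightarrow> f (t *\<^sub>R x + (1 - t) *\<^sub>R y) \<le> ereal (t * r + (1 - t) * s))"

definition epiX :: "('x \<Rightarrow> ereal) \<Rightarrow> ('x \<times> real) set" where
  "epiX h = {(x, r). h x \<le> ereal r}"

text \<open>e-convex sets in X x R: continuous linear functionals on X x R (with sigma(X,X^*)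
  times the usual topology) are (x,t) |-> phi x + a t with phi in D.\<close>
definition econvex_set :: "('x::real_vector \<Rightarrow> real) set \<Rightarrow> ('x \<times> real) set \<Rightarrow> bool" where
  "econvex_set D C \<longleftrightarrow> (\<forall>p. p \<notin> C \<longrightarrow> (\<exists>\<phi>\<in>D. \<exists>a::real.
      \<forall>q\<in>C. \<phi> (fst q - fst p) + a * (snd q - snd p) < 0))"

definition econvex_fn :: "('x::real_vector \<Rightarrow> real) set \<Rightarrow> ('x \<Rightarrow> ereal) \<Rightarrow> bool" where
  "econvex_fn D h \<longleftrightarrow> econvex_set D (epiX h)"

definition eco :: "('x::real_vector \<Rightarrow> real) set \<Rightarrow> ('x \<Rightarrow> ereal) \<Rightarrow> 'x \<Rightarrow> ereal" where
  "eco D g = (\<lambda>x. SUP h \<in> {h. econvex_fn D h \<and> h \<le> g}. h x)"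

definition Lambda_set :: "('x::real_vector \<Rightarrow> real) set \<Rightarrow> ('x \<Rightarrow> ereal) \<Rightarrow> ('x \<Rightarrow> ereal)
    \<Rightarrow> 'x set \<Rightarrow> ('x W \<times> real) set" where
  "Lambda_set D f g A = (Wset D \<times> UNIV) \<inter>
     (\<Inter>w \<in> domW D (cconj g). case w of (u, v, \<gamma>) \<Rightarrow>
        shiftW (epiW D (cconj (\<lambda>x. f x + indic A x))) u (real_of_ereal (cconj g w)))"

definition Omega_set :: "('x::real_vector \<Rightarrow> real) set \<Rightarrow> ('x \<Rightarrow> ereal) \<Rightarrow> ('x \<Rightarrow> ereal)
    \<Rightarrow> 'x set \<Rightarrow> ('x W \<times> real) set" where
  "Omega_set D f g A = (\<Union>z \<in> domW D (cconj (indic A)). case z of (xs, ys, \<alpha>) \<Rightarrow>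
     (Wset D \<times> UNIV) \<inter>
     (\<Inter>w \<in> domW D (cconj g). case w of (u, v, \<gamma>) \<Rightarrow>
        shiftW (epiW D (cconj (\<lambda>x. usub (f x) (coup x (-xs, -ys, \<alpha>)))))
           u (real_of_ereal (cconj g w) - real_of_ereal (cconj (indic A) z))))"

end

theory Submission
  imports Defs
begin

lemma lsub_PInf2[simp]: "lsub a \<infinity> = -\<infinity>"
  by (cases a) (auto simp: lsub_def)
lemma lsub_MInf2[simp]: "a \<noteq> -\<infinity> \<Longrightarrow> lsub a (-\<infinity>) = \<infinity>"
  by (cases a) (auto simp: lsub_def)
lemma lsub_PInf_real[simp]: "lsub \<infinity> (ereal r) = \<infinity>"
  by (auto simp: lsub_def)
lemma lsub_real[simp]: "lsub (ereal a) (ereal b) = ereal (a - b)"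
  by (auto simp: lsub_def)

lemma usub_PInf1[simp]: "usub \<infinity> b = \<infinity>"
  by (cases b) (auto simp: usub_def)
lemma usub_MInf2[simp]: "usub a (-\<infinity>) = \<infinity>"
  by (cases a) (auto simp: usub_def)
lemma usub_MInf1[simp]: "usub (-\<infinity>) (ereal b) = -\<infinity>"
  by (auto simp: usub_def)
lemma usub_PInf2[simp]: "usub (ereal a) \<infinity> = -\<infinity>"
  by (auto simp: usub_def)
lemma usub_real[simp]: "usub (ereal a) (ereal b) = ereal (a - b)"
  by (auto simp: usub_def)

lemma coup_simp[simp]: "coup x (a, b, t) = (if b x < t then ereal (a x) else \<infinity>)"
  by (simp add: coup_def)

lemma coup_ne_MInf[simp]: "coup x w \<noteq> -\<infinity>"
  by (cases w) (auto simp: coup_def)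

lemma cconj_le_iff: "cconj h w \<le> B \<longleftrightarrow> (\<forall>x. lsub (coup x w) (h x) \<le> B)"
  by (simp add: cconj_def SUP_le_iff)

lemma cconj_ne_MInf:
  assumes "h x1 = ereal r1" shows "cconj h w \<noteq> -\<infinity>"
proof -
  have "lsub (coup x1 w) (h x1) \<le> cconj h w" unfolding cconj_def by (rule SUP_upper) simp
  moreover have "lsub (coup x1 w) (h x1) \<noteq> -\<infinity>"
    using assms coup_ne_MInf[of x1 w] by (cases "coup x1 w") auto
  ultimately show ?thesis by auto
qed

lemma proper_real: assumes "proper_fn g" obtains x1 r1 where "g x1 = ereal r1"
  using assms unfolding proper_fn_def by (metis ereal_cases)

lemma eco_le: "eco D g x \<le> g x"
  unfolding eco_def by (rule SUP_least) (auto simp: le_fun_def)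

lemma shiftW_mem:
  "(((p, q, b), r) \<in> shiftW E u K) \<longleftrightarrow> (((\<lambda>x. p x + u x), q, b), r + K) \<in> E"
proof
  assume "(((p, q, b), r) \<in> shiftW E u K)"
  then obtain a b' t s where "((a, b', t), s) \<in> E" "a - u = p" "b' = q" "t = b" "s - K = r"
    by (auto simp: shiftW_def)
  moreover have "a = (\<lambda>x. p x + u x)" using \<open>a - u = p\<close> by (auto simp: fun_eq_iff algebra_simps)
  ultimately show "(((\<lambda>x. p x + u x), q, b), r + K) \<in> E" by auto
next
  assume "(((\<lambda>x. p x + u x), q, b), r + K) \<in> E"
  moreover have "(\<lambda>x. p x + u x) - u = p" by (auto simp: fun_eq_iff)
  ultimately show "(((p, q, b), r) \<in> shiftW E u K)"
    unfolding shiftW_def by (force intro: image_eqI)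
qed

lemma hard:
  assumes dp: "dual_pair D" and pg: "proper_fn g" and gx0: "g x0 < \<infinity>"
    and t: "ereal t < eco D g x0"
  shows "\<exists>\<psi>\<in>D. cconj g (\<psi>, (\<lambda>x. 0), 1) \<le> ereal (\<psi> x0 - t)"
proof -
  from t obtain h where h: "econvex_fn D h" "h \<le> g" "ereal t < h x0"
    unfolding eco_def by (auto simp: less_SUP_iff)
  have hx0: "h x0 < \<infinity>" using le_funD[OF h(2), of x0] gx0 by auto
  obtain s0 where s0: "h x0 = ereal s0" using hx0 h(3) by (cases "h x0") auto
  have "(x0, t) \<notin> epiX h" using h(3) by (auto simp: epiX_def)
  then obtain \<phi> a where \<phi>: "\<phi> \<in> D" and
    sep: "\<forall>q\<in>epiX h. \<phi> (fst q - fst (x0,t)) + a * (snd q - snd (x0,t)) < 0"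
    using h(1) unfolding econvex_fn_def econvex_set_def by blast
  have lin: "linear \<phi>" using dp \<phi> by (auto simp: dual_pair_def)
  have "(x0, s0) \<in> epiX h" using s0 by (simp add: epiX_def)
  hence "a * (s0 - t) < 0" using sep linear_0[OF lin] by fastforce
  moreover have "t < s0" using h(3) s0 by simp
  ultimately have a: "a < 0" by (smt (verit) mult_nonneg_nonneg)
  define \<psi> where "\<psi> = (\<lambda>x. (-1/a) * \<phi> x)"
  have \<psi>D: "\<psi> \<in> D" using dp \<phi> unfolding dual_pair_def \<psi>_def by blast
  have "cconj g (\<psi>, \<lambda>x. 0, 1) \<le> ereal (\<psi> x0 - t)"
    unfolding cconj_le_iff
  proof
    fix x
    show "lsub (coup x (\<psi>, \<lambda>x. 0, 1)) (g x) \<le> ereal (\<psi> x0 - t)"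
    proof (cases "g x")
      case (real gx)
      have "h x \<le> g x" using h(2) by (simp add: le_fun_def)
      hence "(x, gx) \<in> epiX h" using real by (simp add: epiX_def)
      hence "\<phi> (x - x0) + a * (gx - t) < 0" using sep by fastforce
      hence "\<phi> x - \<phi> x0 + a * (gx - t) < 0" using linear_diff[OF lin] by simp
      hence "\<phi> x - \<phi> x0 < (-a) * (gx - t)" by simp
      hence "(\<phi> x - \<phi> x0) / (-a) < gx - t"
        using pos_divide_less_eq[of "-a" "\<phi> x - \<phi> x0" "gx - t"] a by (simp add: mult.commute)
      moreover have "\<psi> x - \<psi> x0 = (\<phi> x - \<phi> x0) / (-a)" unfolding \<psi>_def using a
        by (simp add: field_simps)
      ultimately have "\<psi> x - gx \<le> \<psi> x0 - t" by linarith
      then show ?thesis using real by simp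
    next
      case PInf then show ?thesis by simp
    next
      case MInf then show ?thesis using pg by (auto simp: proper_fn_def)
    qed
  qed
  then show ?thesis using \<psi>D by blast
qed

lemma klem:
  assumes dp: "dual_pair D" and w: "(u,v,\<gamma>) \<in> domW D (cconj g)" and pg: "proper_fn g"
    and gx: "g x < \<infinity>"
  shows "v x < \<gamma> \<and> ereal (u x - real_of_ereal (cconj g (u,v,\<gamma>))) \<le> eco D g x"
proof -
  obtain x1 r1 where "g x1 = ereal r1" using pg proper_real by blast
  hence nm: "cconj g (u,v,\<gamma>) \<noteq> -\<infinity>" by (rule cconj_ne_MInf)
  have "cconj g (u,v,\<gamma>) < \<infinity>" using w by (simp add: domW_def)
  then obtain \<Gamma> where \<Gamma>: "cconj g (u,v,\<gamma>) = ereal \<Gamma>" using nm by (cases "cconj g (u,v,\<gamma>)") auto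
  have uD: "u \<in> D" and vD: "v \<in> D" using w by (auto simp: domW_def Wset_def)
  have linu: "linear u" and linv: "linear v" using dp uD vD by (auto simp: dual_pair_def)
  define k where "k = (\<lambda>y. if v y < \<gamma> then ereal (u y - \<Gamma>) else \<infinity>)"
  have kg: "k \<le> g"
  proof (rule le_funI)
    fix y
    show "k y \<le> g y"
    proof (cases "g y")
      case (real gy)
      have "lsub (coup y (u,v,\<gamma>)) (g y) \<le> cconj g (u,v,\<gamma>)"
        unfolding cconj_def by (rule SUP_upper) simp
      then show ?thesis using real \<Gamma> by (auto simp: k_def split: if_splits)
    next
      case PInf then show ?thesis by simp
    next
      case MInf then show ?thesis using pg by (auto simp: proper_fn_def)
    qed
  qed
  have kc: "econvex_fn D k"
    unfolding econvex_fn_def econvex_set_def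
  proof (intro allI impI)
    fix p assume p: "p \<notin> epiX k"
    obtain x0 s0 where p0: "p = (x0, s0)" by (cases p)
    show "\<exists>\<phi>\<in>D. \<exists>a. \<forall>q\<in>epiX k. \<phi> (fst q - fst p) + a * (snd q - snd p) < 0"
    proof (cases "v x0 < \<gamma>")
      case True
      hence "s0 < u x0 - \<Gamma>" using p p0 by (auto simp: epiX_def k_def)
      have "\<forall>q\<in>epiX k. u (fst q - fst p) + (-1) * (snd q - snd p) < 0"
      proof
        fix q assume "q \<in> epiX k"
        then obtain y s where q: "q = (y, s)" "k y \<le> ereal s" by (cases q) (auto simp: epiX_def)
        hence "v y < \<gamma>" "u y - \<Gamma> \<le> s" by (auto simp: k_def split: if_splits)
        then show "u (fst q - fst p) + (-1) * (snd q - snd p) < 0"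
          using q p0 linear_diff[OF linu] \<open>s0 < u x0 - \<Gamma>\<close> by simp
      qed
      then show ?thesis using uD by blast
    next
      case False
      have "\<forall>q\<in>epiX k. v (fst q - fst p) + 0 * (snd q - snd p) < 0"
      proof
        fix q assume "q \<in> epiX k"
        then obtain y s where q: "q = (y, s)" "k y \<le> ereal s" by (cases q) (auto simp: epiX_def)
        hence "v y < \<gamma>" by (auto simp: k_def split: if_splits)
        then show "v (fst q - fst p) + 0 * (snd q - snd p) < 0"
          using q p0 linear_diff[OF linv] False by simp
      qed
      then show ?thesis using vD by blast
    qed
  qed
  have "k x \<le> eco D g x" unfolding eco_def by (rule SUP_upper) (use kg kc in simp)
  moreover have "eco D g x < \<infinity>" using eco_le[of D g x] gx by auto
  ultimately show ?thesis using \<Gamma> by (auto simp: k_def split: if_splits)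
qed

lemma core:
  assumes dp: "dual_pair D" and pg: "proper_fn g" and dom: "\<forall>x. \<phi> x < \<infinity> \<longrightarrow> g x < \<infinity>"
  shows "(Wset D \<times> UNIV) \<inter> (\<Inter>w \<in> domW D (cconj g). case w of (u, v, \<gamma>) \<Rightarrow>
            shiftW (epiW D (cconj \<phi>)) u (real_of_ereal (cconj g w) - K))
         = epiW D (cconj (\<lambda>x. usub (usub (\<phi> x) (eco D g x)) (ereal K)))"
proof -
  obtain x1 r1 where "g x1 = ereal r1" using pg proper_real by blast
  hence nm: "\<And>w. cconj g w \<noteq> -\<infinity>" by (rule cconj_ne_MInf)
  have D0: "(\<lambda>x. 0) \<in> D" and Dadd: "\<And>p u. p \<in> D \<Longrightarrow> u \<in> D \<Longrightarrow> (\<lambda>x. p x + u x) \<in> D"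
    using dp by (auto simp: dual_pair_def)
  show ?thesis
  proof (rule set_eqI)
    fix pr :: "'a W \<times> real"
    obtain p q \<beta> r where pr: "pr = ((p, q, \<beta>), r)" by (metis prod.exhaust)
    let ?L = "(Wset D \<times> UNIV) \<inter> (\<Inter>w \<in> domW D (cconj g). case w of (u, v, \<gamma>) \<Rightarrow>
            shiftW (epiW D (cconj \<phi>)) u (real_of_ereal (cconj g w) - K))"
    have "((p, q, \<beta>), r) \<in> ?L \<longleftrightarrow>
          (p, q, \<beta>) \<in> Wset D \<and> (\<forall>u v \<gamma>. (u,v,\<gamma>) \<in> domW D (cconj g) \<longrightarrow>
             (\<lambda>x. p x + u x) \<in> D \<and>
             cconj \<phi> ((\<lambda>x. p x + u x), q, \<beta>) \<le> ereal (r + (real_of_ereal (cconj g (u,v,\<gamma>)) - K)))"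
      by (auto simp: shiftW_mem epiW_def Wset_def)
    also have "\<dots> \<longleftrightarrow> ((p, q, \<beta>), r) \<in> epiW D (cconj (\<lambda>x. usub (usub (\<phi> x) (eco D g x)) (ereal K)))"
    proof
      assume L: "(p, q, \<beta>) \<in> Wset D \<and> (\<forall>u v \<gamma>. (u,v,\<gamma>) \<in> domW D (cconj g) \<longrightarrow>
             (\<lambda>x. p x + u x) \<in> D \<and>
             cconj \<phi> ((\<lambda>x. p x + u x), q, \<beta>) \<le> ereal (r + (real_of_ereal (cconj g (u,v,\<gamma>)) - K)))"
      have "\<forall>x. lsub (coup x (p, q, \<beta>)) (usub (usub (\<phi> x) (eco D g x)) (ereal K)) \<le> ereal r"
      proof
        fix x
        show "lsub (coup x (p, q, \<beta>)) (usub (usub (\<phi> x) (eco D g x)) (ereal K)) \<le> ereal r"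
        proof (cases "\<phi> x = \<infinity>")
          case True then show ?thesis by simp
        next
          case False
          hence gx: "g x < \<infinity>" using dom by auto
          show ?thesis
          proof (cases "eco D g x = -\<infinity>")
            case True then show ?thesis by simp
          next
            case False
            have "eco D g x < \<infinity>" using eco_le[of D g x] gx by auto
            then obtain E where E: "eco D g x = ereal E" using False by (cases "eco D g x") auto
            have key: "\<exists>P. \<phi> x = ereal P \<and> q x < \<beta> \<and> p x - P + t + K \<le> r" if tE: "t < E" for t
            proof -
              obtain \<psi> where \<psi>: "\<psi> \<in> D" "cconj g (\<psi>, (\<lambda>x. 0), 1) \<le> ereal (\<psi> x - t)"
                using hard[OF dp pg gx, of t] tE E by auto
              have wd: "(\<psi>, (\<lambda>x. 0), 1) \<in> domW D (cconj g)"
                using \<psi> D0 by (auto simp: domW_def Wset_def)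
              obtain G where G: "cconj g (\<psi>, (\<lambda>x. 0), 1) = ereal G"
                using \<psi>(2) nm by (cases "cconj g (\<psi>, (\<lambda>x. 0), 1)") auto
              have "cconj \<phi> ((\<lambda>x. p x + \<psi> x), q, \<beta>) \<le> ereal (r + (G - K))"
                using L wd G by fastforce
              hence c: "lsub (coup x ((\<lambda>x. p x + \<psi> x), q, \<beta>)) (\<phi> x) \<le> ereal (r + (G - K))"
                by (simp add: cconj_le_iff)
              have GG: "G \<le> \<psi> x - t" using \<psi>(2) G by simp
              show ?thesis
              proof (cases "\<phi> x")
                case (real P)
                show ?thesis
                proof (cases "q x < \<beta>")
                  case True
                  then show ?thesis using c real GG by (intro exI[of _ P]) auto
                next
                  case False then show ?thesis using c real by simp
                qed
              next
                case PInf then show ?thesis using \<open>\<phi> x \<noteq> \<infinity>\<close> by simp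
              next
                case MInf then show ?thesis using c by simp
              qed
            qed
            obtain P where P: "\<phi> x = ereal P" and qx: "q x < \<beta>"
              using key[of "E - 1"] by auto
            have "E \<le> r - p x + P - K"
            proof (rule dense_le)
              fix t assume "t < E"
              then show "t \<le> r - p x + P - K" using key[of t] P by auto
            qed
            then show ?thesis using P E qx by simp
          qed
        qed
      qed
      then show "((p, q, \<beta>), r) \<in> epiW D (cconj (\<lambda>x. usub (usub (\<phi> x) (eco D g x)) (ereal K)))"
        using L by (simp add: epiW_def cconj_le_iff)
    next
      assume R: "((p, q, \<beta>), r) \<in> epiW D (cconj (\<lambda>x. usub (usub (\<phi> x) (eco D g x)) (ereal K)))"
      hence W: "(p, q, \<beta>) \<in> Wset D" and
        R': "\<And>x. lsub (coup x (p, q, \<beta>)) (usub (usub (\<phi> x) (eco D g x)) (ereal K)) \<le> ereal r"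
        by (auto simp: epiW_def cconj_le_iff)
      have "(\<lambda>x. p x + u x) \<in> D \<and>
             cconj \<phi> ((\<lambda>x. p x + u x), q, \<beta>) \<le> ereal (r + (real_of_ereal (cconj g (u,v,\<gamma>)) - K))"
        if w: "(u,v,\<gamma>) \<in> domW D (cconj g)" for u v \<gamma>
      proof
        show "(\<lambda>x. p x + u x) \<in> D" using W w Dadd by (auto simp: Wset_def domW_def)
        have "cconj g (u,v,\<gamma>) < \<infinity>" using w by (simp add: domW_def)
        then obtain \<Gamma> where \<Gamma>: "cconj g (u,v,\<gamma>) = ereal \<Gamma>" using nm
          by (cases "cconj g (u,v,\<gamma>)") auto
        have "lsub (coup x ((\<lambda>x. p x + u x), q, \<beta>)) (\<phi> x) \<le> ereal (r + (\<Gamma> - K))" for x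
        proof (cases "\<phi> x = \<infinity>")
          case True then show ?thesis by simp
        next
          case False
          hence gx: "g x < \<infinity>" using dom by auto
          have k: "v x < \<gamma>" "ereal (u x - \<Gamma>) \<le> eco D g x"
            using klem[OF dp w pg gx] \<Gamma> by auto
          have "eco D g x < \<infinity>" using eco_le[of D g x] gx by auto
          then obtain E where E: "eco D g x = ereal E" using k(2) by (cases "eco D g x") auto
          have uE: "u x - \<Gamma> \<le> E" using k(2) E by simp
          have Rx: "lsub (coup x (p, q, \<beta>)) (usub (usub (\<phi> x) (ereal E)) (ereal K)) \<le> ereal r"
            using R'[of x] E by simp
          show ?thesis
          proof (cases "\<phi> x")
            case (real P)
            show ?thesis
            proof (cases "q x < \<beta>")
              case True then show ?thesis using Rx real uE by simp
            next
              case False then show ?thesis using Rx real by simp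
            qed
          next
            case PInf then show ?thesis using False by simp
          next
            case MInf then show ?thesis using Rx by simp
          qed
        qed
        then show "cconj \<phi> ((\<lambda>x. p x + u x), q, \<beta>) \<le> ereal (r + (real_of_ereal (cconj g (u,v,\<gamma>)) - K))"
          using \<Gamma> by (simp add: cconj_le_iff)
      qed
      then show "(p, q, \<beta>) \<in> Wset D \<and> (\<forall>u v \<gamma>. (u,v,\<gamma>) \<in> domW D (cconj g) \<longrightarrow>
             (\<lambda>x. p x + u x) \<in> D \<and>
             cconj \<phi> ((\<lambda>x. p x + u x), q, \<beta>) \<le> ereal (r + (real_of_ereal (cconj g (u,v,\<gamma>)) - K)))"
        using W by blast
    qed
    finally show "pr \<in> ?L \<longleftrightarrow> pr \<in> epiW D (cconj (\<lambda>x. usub (usub (\<phi> x) (eco D g x)) (ereal K)))"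
      using pr by simp
  qed
qed

lemma usub_swap:
  assumes "a \<noteq> -\<infinity>" "c \<noteq> -\<infinity>" "a \<noteq> \<infinity> \<Longrightarrow> e \<noteq> \<infinity>"
  shows "usub (usub a c) e = usub (usub a e) c"
  using assms by (cases a; cases c; cases e) (auto simp: usub_def)

lemma usub_zero: "usub a (ereal 0) = a"
  by (cases a) (auto simp: usub_def)

theorem proposition5p4:
  fixes D :: "('x::real_vector \<Rightarrow> real) set"
    and f g :: "'x \<Rightarrow> ereal" and A :: "'x set"
  assumes "dual_pair D" and "\<exists>x::'x. x \<noteq> 0"
    and "proper_fn f" and "convex_fn f" and "proper_fn g" and "convex_fn g"
    and "domX f \<subseteq> domX g" and "A \<noteq> {}"
  shows "(Lambda_set D f g A
           = epiW D (cconj (\<lambda>x. usub (f x) (eco D g x) + indic A x))) \<and>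
         (Omega_set D f g A
           = (\<Union>z \<in> domW D (cconj (indic A)). case z of (xs, ys, \<alpha>) \<Rightarrow>
               epiW D (cconj (\<lambda>x. usub (usub (usub (f x) (eco D g x)) (coup x (-xs, -ys, \<alpha>)))
                                   (cconj (indic A) z)))))"
proof
  note dp = assms(1) and pg = assms(5)
  have fm: "\<And>x. f x \<noteq> -\<infinity>" using assms(3) by (auto simp: proper_fn_def)
  have fg: "\<And>x. f x < \<infinity> \<Longrightarrow> g x < \<infinity>" using assms(7) by (auto simp: domX_def)
  have eg: "\<And>x. f x \<noteq> \<infinity> \<Longrightarrow> eco D g x \<noteq> \<infinity>"
  proof -
    fix x assume "f x \<noteq> \<infinity>"
    hence "g x < \<infinity>" using fg by (simp add: less_top)
    thus "eco D g x \<noteq> \<infinity>" using eco_le[of D g x] by auto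
  qed
  have dom1: "\<forall>x. f x + indic A x < \<infinity> \<longrightarrow> g x < \<infinity>"
    using fg fm by (auto simp: indic_def split: if_splits)
  have fe: "(\<lambda>x. usub (usub (f x + indic A x) (eco D g x)) (ereal 0)) =
            (\<lambda>x. usub (f x) (eco D g x) + indic A x)"
  proof
    fix x
    show "usub (usub (f x + indic A x) (eco D g x)) (ereal 0) = usub (f x) (eco D g x) + indic A x"
      using fm[of x] eg[of x]
      by (cases "f x"; cases "eco D g x") (auto simp: usub_zero indic_def usub_def)
  qed
  show "Lambda_set D f g A = epiW D (cconj (\<lambda>x. usub (f x) (eco D g x) + indic A x))"
    using core[OF dp pg dom1, of 0, unfolded diff_zero fe] unfolding Lambda_set_def .
  show "Omega_set D f g A
           = (\<Union>z \<in> domW D (cconj (indic A)). case z of (xs, ys, \<alpha>) \<Rightarrow>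
               epiW D (cconj (\<lambda>x. usub (usub (usub (f x) (eco D g x)) (coup x (-xs, -ys, \<alpha>)))
                                   (cconj (indic A) z))))"
    unfolding Omega_set_def
  proof (rule SUP_cong[OF refl])
    fix z assume z: "z \<in> domW D (cconj (indic A))"
    obtain xs ys \<alpha> where zz: "z = (xs, ys, \<alpha>)" by (metis prod.exhaust)
    obtain a where "a \<in> A" using assms(8) by blast
    hence "indic A a = ereal 0" by (simp add: indic_def)
    hence nm: "cconj (indic A) z \<noteq> -\<infinity>" by (rule cconj_ne_MInf)
    have "cconj (indic A) z < \<infinity>" using z by (simp add: domW_def)
    then obtain K where K: "cconj (indic A) z = ereal K" using nm by (cases "cconj (indic A) z") auto
    let ?\<phi> = "\<lambda>x. usub (f x) (coup x (-xs, -ys, \<alpha>))"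
    have dom2: "\<forall>x. ?\<phi> x < \<infinity> \<longrightarrow> g x < \<infinity>"
    proof (intro allI impI)
      fix x assume "?\<phi> x < \<infinity>"
      hence "f x \<noteq> \<infinity>" by auto
      thus "g x < \<infinity>" using fg by (simp add: less_top)
    qed
    have fe2: "(\<lambda>x. usub (usub (?\<phi> x) (eco D g x)) (ereal K)) =
       (\<lambda>x. usub (usub (usub (f x) (eco D g x)) (coup x (-xs, -ys, \<alpha>))) (cconj (indic A) z))"
    proof
      fix x
      show "usub (usub (?\<phi> x) (eco D g x)) (ereal K) =
         usub (usub (usub (f x) (eco D g x)) (coup x (-xs, -ys, \<alpha>))) (cconj (indic A) z)"
        using usub_swap[of "f x" "coup x (-xs, -ys, \<alpha>)" "eco D g x"] fm[of x] eg[of x] K by simp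
    qed
    show "(case z of (xs, ys, \<alpha>) \<Rightarrow> (Wset D \<times> UNIV) \<inter>
           (\<Inter>w\<in>domW D (cconj g). case w of (u, v, \<gamma>) \<Rightarrow>
              shiftW (epiW D (cconj (\<lambda>x. usub (f x) (coup x (- xs, - ys, \<alpha>))))) u
               (real_of_ereal (cconj g w) - real_of_ereal (cconj (indic A) z)))) =
          (case z of (xs, ys, \<alpha>) \<Rightarrow>
           epiW D (cconj (\<lambda>x. usub (usub (usub (f x) (eco D g x)) (coup x (- xs, - ys, \<alpha>))) (cconj (indic A) z))))"
    proof -
      have Kr: "real_of_ereal (cconj (indic A) z) = K" using K by simp
      have C: "(Wset D \<times> UNIV) \<inter> (\<Inter>w \<in> domW D (cconj g). case w of (u, v, \<gamma>) \<Rightarrow>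
            shiftW (epiW D (cconj ?\<phi>)) u (real_of_ereal (cconj g w) - real_of_ereal (cconj (indic A) z)))
         = epiW D (cconj (\<lambda>x. usub (usub (usub (f x) (eco D g x)) (coup x (-xs, -ys, \<alpha>))) (cconj (indic A) z)))"
        using core[OF dp pg dom2, of K, unfolded fe2] unfolding Kr .
      show ?thesis using C by (simp only: zz prod.case)
    qed
  qed
qed

end
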